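(* Let $g\colon\Sigma_0\to\Sigma_1$ be a strict morphism of connected labeled graphs that induces a surjection on fundamental groups. Suppose that for some $b\in\mathcal B$ the number of edges of $\Sigma_1$ labeled $b^{\pm1}$ is less than the number of edges of $\Sigma_0$ labeled $b^{\pm1}$. Then there are an immersed edge path $\sigma\colon I\to\Sigma_0$, given by $e_0e_1\cdots e_m$, a labeled tree $T$, and strict morphisms $g'\colon I\to T$ and $T\to\Sigma_1$ such that $g\circ\sigma$ equals the composite $I\to T\to\Sigma_1$, $e_0$ and $e_m^{-1}$ carry the same label $b'\in\{b,b^{-1}\}$, no $e_i$ with $0<i<m$ is labeled $b^{\pm1}$, and $g'$ maps the first edge and the inverse of the last edge of $I$ to the same edge of $T$.
   Context: Labeled graphs have oriented edges labeled in $\mathcal B^{\pm1}$ ($\mathcal B$ a finite set), with $e^{-1}$ carrying the inverse label. A map of labeled graphs is a morphism if it preserves labels and orientations and its lift to universal covers is a simplicial map of trees; it is strict if no edge is mapped to a point. An edge path is a strict morphism from an oriented subdivided compact interval $I$, identified with its sequence of oriented edges $e_0\cdots e_m$; it is immersed if no $e_i=e_{i-1}^{-1}$. *)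

theory Defs
  imports Main
begin

text \<open>A labeled graph: vertex set, set of oriented edges, source map, edge inversion
  (fixed-point free involution), and labels in B^{+-1}: a label is a pair (b, s) with
  s = True meaning b and s = False meaning b^{-1}.\<close>

record ('v, 'e, 'b) lgraph =
  verts :: "'v set"
  edges :: "'e set"
  src   :: "'e \<Rightarrow> 'v"
  einv  :: "'e \<Rightarrow> 'e"
  lab   :: "'e \<Rightarrow> 'b \<times> bool"

definition tgt :: "('v, 'e, 'b) lgraph \<Rightarrow> 'e \<Rightarrow> 'v" where
  "tgt G e = src G (einv G e)"

definition inv_label :: "'b \<times> bool \<Rightarrow> 'b \<times> bool" where
  "inv_label l = (fst l, \<not> snd l)"

definition wf_lgraph :: "('v, 'e, 'b) lgraph \<Rightarrow> bool" where
  "wf_lgraph G \<longleftrightarrow>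
     (\<forall>e \<in> edges G. src G e \<in> verts G \<and> einv G e \<in> edges G \<and>
        einv G (einv G e) = e \<and> einv G e \<noteq> e \<and>
        lab G (einv G e) = inv_label (lab G e))"

fun is_path :: "('v, 'e, 'b) lgraph \<Rightarrow> 'v \<Rightarrow> 'e list \<Rightarrow> 'v \<Rightarrow> bool" where
  "is_path G v [] w \<longleftrightarrow> v = w \<and> v \<in> verts G"
| "is_path G v (e # es) w \<longleftrightarrow> e \<in> edges G \<and> src G e = v \<and> is_path G (tgt G e) es w"

definition connected_lg :: "('v, 'e, 'b) lgraph \<Rightarrow> bool" where
  "connected_lg G \<longleftrightarrow> verts G \<noteq> {} \<and> (\<forall>u \<in> verts G. \<forall>v \<in> verts G. \<exists>p. is_path G u p v)"

definition immersed :: "('v, 'e, 'b) lgraph \<Rightarrow> 'e list \<Rightarrow> bool" where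
  "immersed G p \<longleftrightarrow> (\<forall>i. Suc i < length p \<longrightarrow> p ! Suc i \<noteq> einv G (p ! i))"

definition is_tree :: "('v, 'e, 'b) lgraph \<Rightarrow> bool" where
  "is_tree G \<longleftrightarrow> wf_lgraph G \<and> connected_lg G \<and>
     (\<forall>v p. is_path G v p v \<and> immersed G p \<longrightarrow> p = [])"

definition backtrack_step :: "('v, 'e, 'b) lgraph \<Rightarrow> 'e list \<Rightarrow> 'e list \<Rightarrow> bool" where
  "backtrack_step G p q \<longleftrightarrow> (\<exists>xs e ys. p = xs @ [e, einv G e] @ ys \<and> q = xs @ ys)"

definition homotopic :: "('v, 'e, 'b) lgraph \<Rightarrow> 'e list \<Rightarrow> 'e list \<Rightarrow> bool" where
  "homotopic G = (\<lambda>p q. backtrack_step G p q \<or> backtrack_step G q p)\<^sup>*\<^sup>*"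

definition strict_morphism ::
  "('v, 'e, 'b) lgraph \<Rightarrow> ('w, 'f, 'b) lgraph \<Rightarrow> ('v \<Rightarrow> 'w) \<times> ('e \<Rightarrow> 'f) \<Rightarrow> bool" where
  "strict_morphism G H f \<longleftrightarrow>
     (\<forall>v \<in> verts G. fst f v \<in> verts H) \<and>
     (\<forall>e \<in> edges G. snd f e \<in> edges H \<and> src H (snd f e) = fst f (src G e) \<and>
        snd f (einv G e) = einv H (snd f e) \<and> lab H (snd f e) = lab G e)"

text \<open>Surjectivity on fundamental groups at base vertex v0 (for connected graphs
  independent of v0): every closed path at f(v0) is homotopic to the image of a
  closed path at v0.\<close>

definition pi1_surjective ::
  "('v, 'e, 'b) lgraph \<Rightarrow> ('w, 'f, 'b) lgraph \<Rightarrow> ('v \<Rightarrow> 'w) \<times> ('e \<Rightarrow> 'f) \<Rightarrow> 'v \<Rightarrow> bool" where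
  "pi1_surjective G H f v0 \<longleftrightarrow>
     (\<forall>q. is_path H (fst f v0) q (fst f v0) \<longrightarrow>
        (\<exists>p. is_path G v0 p v0 \<and> homotopic H (map (snd f) p) q))"

text \<open>The interval with m+1 edges: vertices 0..m+1, forward edge (i,True) from i to i+1
  with label L i, backward edge (i,False) its inverse.\<close>

definition interval_graph :: "nat \<Rightarrow> (nat \<Rightarrow> 'b \<times> bool) \<Rightarrow> (nat, nat \<times> bool, 'b) lgraph" where
  "interval_graph m L =
     \<lparr> verts = {0..Suc m},
       edges = {(i, d). i \<le> m},
       src = (\<lambda>(i, d). if d then i else Suc i),
       einv = (\<lambda>(i, d). (i, \<not> d)),
       lab = (\<lambda>(i, d). if d then L i else inv_label (L i)) \<rparr>"

text \<open>Number of (geometric) edges labeled b^{+-1} = number of oriented edges labeled b.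
  "Fewer" is taken in the sense of cardinality: no injection from B into A.\<close>

definition b_edges :: "('v, 'e, 'b) lgraph \<Rightarrow> 'b \<Rightarrow> 'e set" where
  "b_edges G b = {e \<in> edges G. lab G e = (b, True)}"

definition card_less :: "'a set \<Rightarrow> 'c set \<Rightarrow> bool" where
  "card_less A B \<longleftrightarrow> \<not> (\<exists>f. inj_on f B \<and> f ` B \<subseteq> A)"

end

theory Submission
  imports Defs
begin
definition pushG :: "('v,'e,'b) lgraph \<Rightarrow> 'e list \<Rightarrow> 'e \<Rightarrow> 'e list" where
  "pushG G s a = (if s \<noteq> [] \<and> last s = einv G a then butlast s else s @ [a])"

definition Rd :: "('v,'e,'b) lgraph \<Rightarrow> 'e list \<Rightarrow> 'e list \<Rightarrow> 'e list" where
  "Rd G s xs = foldl (pushG G) s xs"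

lemma Rd_Nil[simp]: "Rd G s [] = s" by (simp add: Rd_def)
lemma Rd_Cons[simp]: "Rd G s (x#xs) = Rd G (pushG G s x) xs" by (simp add: Rd_def)
lemma Rd_append[simp]: "Rd G s (xs@ys) = Rd G (Rd G s xs) ys" by (simp add: Rd_def)

definition reduced :: "('v,'e,'b) lgraph \<Rightarrow> 'e list \<Rightarrow> bool" where
  "reduced G s \<longleftrightarrow> set s \<subseteq> edges G \<and> immersed G s"

lemma wfD:
  assumes "wf_lgraph G" "e \<in> edges G"
  shows "src G e \<in> verts G" "einv G e \<in> edges G" "einv G (einv G e) = e" "einv G e \<noteq> e"
        "lab G (einv G e) = inv_label (lab G e)"
  using assms unfolding wf_lgraph_def by auto

lemma immersed_Nil[simp]: "immersed G []" by (simp add: immersed_def)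

lemma immersed_snoc:
  "immersed G (s@[a]) \<longleftrightarrow> immersed G s \<and> (s \<noteq> [] \<longrightarrow> a \<noteq> einv G (last s))"
proof -
  have "immersed G (s@[a]) \<longleftrightarrow> (\<forall>i. Suc i < length s \<longrightarrow> s ! Suc i \<noteq> einv G (s ! i)) \<and>
          (s \<noteq> [] \<longrightarrow> a \<noteq> einv G (s ! (length s - 1)))"
    unfolding immersed_def
    apply (auto simp: nth_append split: if_splits)
    apply (erule allE[of _ "length s - 1"]; simp)
    apply (subgoal_tac "i = length s - 1"; simp)
    done
  thus ?thesis by (simp add: immersed_def last_conv_nth)
qed

lemma immersed_butlast: "immersed G s \<Longrightarrow> immersed G (butlast s)"
  by (cases s rule: rev_cases) (auto simp: immersed_snoc)

lemma reduced_Nil[simp]: "reduced G []" by (simp add: reduced_def)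

lemma push_reduced:
  assumes "wf_lgraph G" "reduced G s" "a \<in> edges G"
  shows "reduced G (pushG G s a)"
proof (cases "s \<noteq> [] \<and> last s = einv G a")
  case True
  then show ?thesis using assms by (auto simp: pushG_def reduced_def immersed_butlast dest: in_set_butlastD)
next
  case False
  have "s \<noteq> [] \<Longrightarrow> a \<noteq> einv G (last s)"
  proof
    assume "s \<noteq> []" "a = einv G (last s)"
    then have "last s \<in> edges G" using assms(2) by (auto simp: reduced_def)
    then have "einv G a = last s" using \<open>a = _\<close> wfD[OF assms(1)] by auto
    with False \<open>s \<noteq> []\<close> show False by auto
  qed
  then show ?thesis using False assms by (auto simp: pushG_def reduced_def immersed_snoc)
qed

lemma push_cancel:
  assumes "wf_lgraph G" "reduced G s" "a \<in> edges G"
  shows "pushG G (pushG G s a) (einv G a) = s"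
proof (cases "s \<noteq> [] \<and> last s = einv G a")
  case True
  then obtain t where s: "s = t @ [einv G a]" by (metis append_butlast_last_id)
  have "t \<noteq> [] \<Longrightarrow> last t \<noteq> a"
  proof
    assume "t \<noteq> []" "last t = a"
    then have "einv G a = einv G (last t)" by simp
    with assms(2) s \<open>t\<noteq>[]\<close> show False by (auto simp: reduced_def immersed_snoc)
  qed
  then show ?thesis using s wfD[OF assms(1,3)] by (auto simp: pushG_def)
next
  case False
  then show ?thesis using wfD[OF assms(1,3)] by (auto simp: pushG_def)
qed

lemma Rd_reduced:
  assumes "wf_lgraph G" "reduced G s" "set xs \<subseteq> edges G"
  shows "reduced G (Rd G s xs)"
  using assms(2,3) by (induction xs arbitrary: s) (auto intro: push_reduced[OF assms(1)])

definition rev_path :: "('v,'e,'b) lgraph \<Rightarrow> 'e list \<Rightarrow> 'e list" where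
  "rev_path G xs = rev (map (einv G) xs)"

lemma rev_path_simps[simp]: "rev_path G [] = []" "rev_path G (x#xs) = rev_path G xs @ [einv G x]"
  "rev_path G (xs@ys) = rev_path G ys @ rev_path G xs"
  by (auto simp: rev_path_def)

lemma rev_path_edges: "wf_lgraph G \<Longrightarrow> set xs \<subseteq> edges G \<Longrightarrow> set (rev_path G xs) \<subseteq> edges G"
  by (auto simp: rev_path_def dest: wfD(2))

lemma rev_rev_path: "wf_lgraph G \<Longrightarrow> set xs \<subseteq> edges G \<Longrightarrow> rev_path G (rev_path G xs) = xs"
  by (induction xs) (auto dest: wfD(3))

lemma Rd_inverse:
  assumes "wf_lgraph G" "reduced G s" "set xs \<subseteq> edges G"
  shows "Rd G (Rd G s xs) (rev_path G xs) = s"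
  using assms(2,3)
proof (induction xs arbitrary: s)
  case Nil then show ?case by simp
next
  case (Cons x xs)
  have r: "reduced G (pushG G s x)" using push_reduced[OF assms(1)] Cons by auto
  show ?case using Cons.IH[OF r] Cons.prems push_cancel[OF assms(1)] by simp
qed

lemma Rd_inverse':
  assumes "wf_lgraph G" "reduced G s" "set xs \<subseteq> edges G"
  shows "Rd G (Rd G s (rev_path G xs)) xs = s"
  using Rd_inverse[OF assms(1,2) rev_path_edges[OF assms(1,3)]] rev_rev_path[OF assms(1,3)] by simp

lemma Rd_Nil_reduced:
  assumes "reduced G p" and wf: "wf_lgraph G" shows "Rd G [] p = p"
proof -
  have "\<And>s. reduced G (s@p) \<Longrightarrow> Rd G s p = s @ p"
  proof (induction p rule: rev_induct)
    case Nil then show ?case by simp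
  next
    case (snoc x xs)
    have "reduced G (s@xs)" using snoc.prems(1)
      by (metis append_assoc butlast_snoc immersed_butlast reduced_def set_append le_sup_iff)
    then have IH: "Rd G s xs = s @ xs" using snoc.IH by (simp add: reduced_def)
    show ?case
    proof (cases "s @ xs = []")
      case True then show ?thesis using IH by (simp add: pushG_def)
    next
      case False
      then have "x \<noteq> einv G (last (s@xs))" using snoc.prems(1)
        by (simp add: reduced_def immersed_snoc[where s="s@xs", simplified])
      moreover have "last (s@xs) \<in> edges G" using snoc.prems False last_in_set[of "s@xs"] by (auto simp: reduced_def)
      moreover have "x \<in> edges G" using snoc.prems by (auto simp: reduced_def)
      ultimately show ?thesis using IH False snoc.prems(1) wfD(3)[OF wf] by (auto simp: pushG_def)
    qed
  qed
  from this[of "[]"] assms show ?thesis by simp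
qed

lemma Rd_absorb:
  assumes wf: "wf_lgraph G" and "reduced G s" "set u \<subseteq> edges G"
  shows "Rd G s u = Rd G s (Rd G [] u)"
  using assms(3)
proof (induction u rule: rev_induct)
  case Nil then show ?case by simp
next
  case (snoc a u)
  let ?v = "Rd G [] u"
  have IH: "Rd G s u = Rd G s ?v" using snoc by auto
  have a: "a \<in> edges G" using snoc by auto
  have rv: "reduced G ?v" using Rd_reduced[OF wf reduced_Nil] snoc by auto
  show ?case
  proof (cases "?v \<noteq> [] \<and> last ?v = einv G a")
    case True
    then obtain v' where v: "?v = v' @ [einv G a]" by (metis append_butlast_last_id)
    have rv': "reduced G v'" using rv v by (auto simp: reduced_def immersed_snoc)
    have t: "reduced G (Rd G s v')" using Rd_reduced[OF wf assms(2)] rv' by (auto simp: reduced_def)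
    have "pushG G (Rd G s u) a = pushG G (pushG G (Rd G s v') (einv G a)) (einv G (einv G a))"
      using IH v wfD[OF wf a] by simp
    also have "\<dots> = Rd G s v'" using push_cancel[OF wf t wfD(2)[OF wf a]] .
    finally show ?thesis using True v by (simp add: pushG_def)
  next
    case False
    then have pv: "pushG G ?v a = ?v @ [a]" unfolding pushG_def by (rule if_not_P)
    show ?thesis using IH pv by simp
  qed
qed

lemma Rd_transfer:
  assumes wf: "wf_lgraph G" and p: "reduced G p" and u: "set u \<subseteq> edges G" and eq: "Rd G p u = p"
  shows "Rd G [] u = []"
proof -
  have pe: "set p \<subseteq> edges G" using p by (simp add: reduced_def)
  define q where "q = Rd G [] (rev_path G p)"
  have rq: "reduced G q" unfolding q_def using Rd_reduced[OF wf reduced_Nil rev_path_edges[OF wf pe]] .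
  have qp: "Rd G q p = []" unfolding q_def using Rd_inverse'[OF wf reduced_Nil pe] .
  have "Rd G [] u = Rd G (Rd G q p) u" using qp by simp
  also have "\<dots> = Rd G q (p @ u)" by simp
  also have "\<dots> = Rd G q (Rd G [] (p@u))" by (rule Rd_absorb[OF wf rq]) (use pe u in auto)
  also have "Rd G [] (p@u) = Rd G p u" using Rd_Nil_reduced[OF p wf] by (simp only: Rd_append)
  hence "Rd G q (Rd G [] (p@u)) = Rd G q (Rd G p u)" by simp
  also have "\<dots> = []" using eq qp by simp
  finally show ?thesis .
qed

lemma Rd_null:
  assumes wf: "wf_lgraph G" and "reduced G s" "set u \<subseteq> edges G" "Rd G [] u = []"
  shows "Rd G s u = s"
  using Rd_absorb[OF assms(1-3)] assms(4) by simp

section \<open>Junk handling\<close>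

definition nreal :: "('v,'e,'b) lgraph \<Rightarrow> 'e \<Rightarrow> nat" where
  "nreal G y = (LEAST k. (einv G ^^ k) y \<in> edges G)"

definition phi :: "('v,'e,'b) lgraph \<Rightarrow> 'e \<Rightarrow> 'e list" where
  "phi G y = (if \<exists>k. (einv G ^^ k) y \<in> edges G then
      (if even (nreal G y) then [(einv G ^^ nreal G y) y] else [einv G ((einv G ^^ nreal G y) y)])
     else [])"

definition Phi :: "('v,'e,'b) lgraph \<Rightarrow> 'e list \<Rightarrow> 'e list" where
  "Phi G xs = concat (map (phi G) xs)"

lemma phi_edge: "y \<in> edges G \<Longrightarrow> phi G y = [y]"
proof -
  assume y: "y \<in> edges G"
  then have "nreal G y = 0" unfolding nreal_def by (intro Least_eq_0) simp
  then show ?thesis using y unfolding phi_def by (auto intro: exI[of _ 0])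
qed

lemma Phi_edges: "set xs \<subseteq> edges G \<Longrightarrow> Phi G xs = xs"
  by (induction xs) (auto simp: Phi_def phi_edge)

lemma phi_in_edges:
  assumes wf: "wf_lgraph G" shows "set (phi G y) \<subseteq> edges G"
proof (cases "\<exists>k. (einv G ^^ k) y \<in> edges G")
  case True
  then have "(einv G ^^ nreal G y) y \<in> edges G" unfolding nreal_def by (rule LeastI_ex)
  then show ?thesis using True wfD[OF wf] unfolding phi_def by auto
next
  case False then show ?thesis unfolding phi_def by auto
qed

lemma Phi_in_edges: "wf_lgraph G \<Longrightarrow> set (Phi G xs) \<subseteq> edges G"
  using phi_in_edges by (fastforce simp: Phi_def)

lemma phi_pair:
  assumes wf: "wf_lgraph G"
  shows "phi G y @ phi G (einv G y) = [] \<or> (\<exists>a\<in>edges G. phi G y @ phi G (einv G y) = [a, einv G a])"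
proof (cases "y \<in> edges G")
  case True
  then have "phi G y @ phi G (einv G y) = [y, einv G y]"
    using phi_edge[OF True] phi_edge[OF wfD(2)[OF wf True]] by simp
  then show ?thesis using True by blast
next
  case False
  note yn = False
  show ?thesis
  proof (cases "\<exists>k. (einv G ^^ k) y \<in> edges G")
    case True
    then obtain k where k: "(einv G ^^ k) y \<in> edges G" by blast
    have k0: "k \<noteq> 0" using k yn by (cases k) auto
    have ex2: "\<exists>k. (einv G ^^ k) (einv G y) \<in> edges G"
    proof
      have "(einv G ^^ (Suc (k-1))) y = (einv G ^^ (k-1)) (einv G y)" by (simp only: funpow_Suc_right o_apply)
      then show "(einv G ^^ (k-1)) (einv G y) \<in> edges G" using k k0 by simp
    qed
    have L: "(LEAST k. (einv G ^^ k) y \<in> edges G) = Suc (LEAST m. (einv G ^^ Suc m) y \<in> edges G)"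
      by (rule Least_Suc) (use k yn in auto)
    have fe: "(\<lambda>m. (einv G ^^ Suc m) y \<in> edges G) = (\<lambda>m. (einv G ^^ m) (einv G y) \<in> edges G)"
      by (simp only: funpow_Suc_right o_apply)
    have nr: "nreal G y = Suc (nreal G (einv G y))"
      unfolding nreal_def L fe ..
    define z where "z = (einv G ^^ nreal G (einv G y)) (einv G y)"
    have z: "z \<in> edges G" unfolding z_def nreal_def using ex2 by (rule LeastI_ex)
    have zy: "(einv G ^^ nreal G y) y = z" unfolding z_def nr by (simp add: funpow_Suc_right del: funpow.simps)
    have ey: "\<exists>k. (einv G ^^ k) y \<in> edges G" using k by blast
    show ?thesis
    proof (cases "even (nreal G (einv G y))")
      case True
      have p1: "phi G (einv G y) = [z]" unfolding phi_def if_P[OF ex2] z_def[symmetric] using True by simp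
      have od: "\<not> even (nreal G y)" using True nr by simp
      have p2: "phi G y = [einv G z]" unfolding phi_def if_P[OF ey] zy using od by simp
      have "phi G y @ phi G (einv G y) = [einv G z, einv G (einv G z)]" using p1 p2 wfD(3)[OF wf z] by simp
      then show ?thesis using wfD(2)[OF wf z] by blast
    next
      case False
      have p1: "phi G (einv G y) = [einv G z]" unfolding phi_def if_P[OF ex2] z_def[symmetric] using False by simp
      have ev: "even (nreal G y)" using False nr by simp
      have p2: "phi G y = [z]" unfolding phi_def if_P[OF ey] zy using ev by simp
      have "phi G y @ phi G (einv G y) = [z, einv G z]" using p1 p2 by simp
      then show ?thesis using z by blast
    qed
  next
    case False
    have "\<not> (\<exists>k. (einv G ^^ k) (einv G y) \<in> edges G)"
    proof
      assume "\<exists>k. (einv G ^^ k) (einv G y) \<in> edges G"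
      then obtain k where "(einv G ^^ k) (einv G y) \<in> edges G" by blast
      moreover have "(einv G ^^ (Suc k)) y = (einv G ^^ k) (einv G y)" by (simp only: funpow_Suc_right o_apply)
      ultimately show False using False by metis
    qed
    then show ?thesis using False unfolding phi_def by auto
  qed
qed

lemma homotopic_Rd:
  assumes wf: "wf_lgraph G" and s: "reduced G s" and h: "homotopic G xs ys"
  shows "Rd G s (Phi G xs) = Rd G s (Phi G ys)"
proof -
  have bstep: "Rd G s (Phi G p) = Rd G s (Phi G q)" if bs: "backtrack_step G p q" for p q
  proof -
    obtain as e cs where p: "p = as @ [e, einv G e] @ cs" and q: "q = as @ cs"
      using bs unfolding backtrack_step_def by blast
    let ?t = "Rd G s (Phi G as)"
    have t: "reduced G ?t" using Rd_reduced[OF wf s Phi_in_edges[OF wf]] .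
    have mid: "Rd G ?t (phi G e @ phi G (einv G e)) = ?t"
      using phi_pair[OF wf, of e]
    proof
      assume "phi G e @ phi G (einv G e) = []" then show ?thesis by (simp del: Rd_append)
    next
      assume "\<exists>a\<in>edges G. phi G e @ phi G (einv G e) = [a, einv G a]"
      then obtain a where "a \<in> edges G" "phi G e @ phi G (einv G e) = [a, einv G a]" by blast
      then show ?thesis using push_cancel[OF wf t] by (simp del: Rd_append)
    qed
    have "Rd G s (Phi G p) = Rd G (Rd G ?t (phi G e @ phi G (einv G e))) (Phi G cs)"
      unfolding p Phi_def by simp
    also have "\<dots> = Rd G s (Phi G q)" using mid unfolding q Phi_def by simp
    finally show ?thesis .
  qed
  from h show ?thesis unfolding homotopic_def
  proof (induction rule: rtranclp_induct)
    case base then show ?case by simp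
  next
    case (step y z)
    from step.hyps(2) have "Rd G s (Phi G y) = Rd G s (Phi G z)"
    proof
      assume "backtrack_step G y z" then show ?thesis by (rule bstep)
    next
      assume "backtrack_step G z y" then show ?thesis using bstep[of z y] by simp
    qed
    then show ?case using step.IH by simp
  qed
qed

section \<open>Paths\<close>


lemma is_path_edges: "is_path G u p v \<Longrightarrow> set p \<subseteq> edges G \<and> v \<in> verts G"
  by (induction p arbitrary: u) auto

lemma is_path_src: assumes wf: "wf_lgraph G" and p: "is_path G u p v" shows "u \<in> verts G"
proof (cases p)
  case Nil then show ?thesis using p by auto
next
  case (Cons e es) then show ?thesis using p wfD(1)[OF wf, of e] by auto
qed

lemma is_path_append:
  assumes wf: "wf_lgraph G"
  shows "is_path G u (xs@ys) v \<longleftrightarrow> (\<exists>w. is_path G u xs w \<and> is_path G w ys v)"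
  by (induction xs arbitrary: u) (auto intro: is_path_src[OF wf])

lemma tgt_in: "wf_lgraph G \<Longrightarrow> e \<in> edges G \<Longrightarrow> tgt G e \<in> verts G"
  by (auto simp: tgt_def dest: wfD)

lemma is_path_rev:
  assumes wf: "wf_lgraph G"
  shows "is_path G u p v \<Longrightarrow> is_path G v (rev_path G p) u"
proof (induction p arbitrary: u)
  case Nil then show ?case by auto
next
  case (Cons e p)
  then have e: "e \<in> edges G" and IH: "is_path G v (rev_path G p) (tgt G e)" and u: "src G e = u" by auto
  have "is_path G (tgt G e) [einv G e] u"
    using wfD[OF wf e] u by (auto simp: tgt_def)
  then show ?case using IH by (auto simp: is_path_append[OF wf])
qed

lemma morph_tgt:
  assumes wf: "wf_lgraph G" and f: "strict_morphism G H f" and e: "e \<in> edges G"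
  shows "tgt H (snd f e) = fst f (tgt G e)"
  using f wfD[OF wf e] e unfolding strict_morphism_def tgt_def by metis

lemma morph_path:
  assumes wf: "wf_lgraph G" and f: "strict_morphism G H f"
  shows "is_path G u p v \<Longrightarrow> is_path H (fst f u) (map (snd f) p) (fst f v)"
proof (induction p arbitrary: u)
  case Nil then show ?case using f by (auto simp: strict_morphism_def)
next
  case (Cons e p)
  then show ?case using f morph_tgt[OF wf f] by (auto simp: strict_morphism_def)
qed

lemma morph_rev_path:
  assumes f: "strict_morphism G H f" and "set p \<subseteq> edges G"
  shows "map (snd f) (rev_path G p) = rev_path H (map (snd f) p)"
  using assms unfolding strict_morphism_def rev_path_def by (induction p) auto

lemma morph_edges: "strict_morphism G H f \<Longrightarrow> set p \<subseteq> edges G \<Longrightarrow> set (map (snd f) p) \<subseteq> edges H"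
  by (auto simp: strict_morphism_def)

definition endv :: "('v,'e,'b) lgraph \<Rightarrow> 'v \<Rightarrow> 'e list \<Rightarrow> 'v" where
  "endv G u p = (if p = [] then u else tgt G (last p))"

lemma is_path_endv: "is_path G u p v \<Longrightarrow> v = endv G u p"
proof (induction p arbitrary: u)
  case Nil then show ?case by (simp add: endv_def)
next
  case (Cons e p) then show ?case by (cases p) (auto simp: endv_def)
qed

lemma push_path:
  assumes wf: "wf_lgraph G" and s: "is_path G u s w" and a: "a \<in> edges G" "src G a = w"
  shows "is_path G u (pushG G s a) (tgt G a)"
proof (cases "s \<noteq> [] \<and> last s = einv G a")
  case True
  then obtain t where st: "s = t @ [einv G a]" by (metis append_butlast_last_id)
  with s obtain w' where "is_path G u t w'" "is_path G w' [einv G a] w"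
    by (auto simp: is_path_append[OF wf])
  then have "is_path G u t (tgt G a)" by (auto simp: tgt_def)
  then show ?thesis using True st by (simp add: pushG_def)
next
  case False
  have "is_path G w [a] (tgt G a)" using a tgt_in[OF wf a(1)] by auto
  then show ?thesis using False s by (auto simp: pushG_def is_path_append[OF wf])
qed

lemma Rd_path:
  assumes wf: "wf_lgraph G"
  shows "is_path G u s w \<Longrightarrow> is_path G w xs v \<Longrightarrow> is_path G u (Rd G s xs) v"
proof (induction xs arbitrary: s w)
  case Nil then show ?case using is_path_endv by fastforce
next
  case (Cons x xs)
  then have "is_path G u (pushG G s x) (tgt G x)" using push_path[OF wf] by auto
  then show ?case using Cons by auto
qed

locale tree_ctx =
  fixes H :: "('v, 'e, 'b) lgraph" and W :: "'e list" and z :: 'v and z' :: 'v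
  assumes wf: "wf_lgraph H" and Wp: "is_path H z W z'"
begin

definition vk :: "nat \<Rightarrow> 'e list" where "vk k = Rd H [] (take k W)"
definition V :: "'e list set" where "V = vk ` {0..length W}"
definition code :: "'e list \<Rightarrow> nat" where "code c = (LEAST k. vk k = c)"

lemma We: "set W \<subseteq> edges H" using is_path_edges[OF Wp] by simp

lemma vk_Suc: "k < length W \<Longrightarrow> vk (Suc k) = pushG H (vk k) (W!k)"
  by (simp add: vk_def take_Suc_conv_app_nth)

lemma vk_0: "vk 0 = []" by (simp add: vk_def)

lemma vk_reduced: "reduced H (vk k)"
  unfolding vk_def by (rule Rd_reduced[OF wf reduced_Nil]) (use We in \<open>auto dest: in_set_takeD\<close>)

lemma take_path: "k \<le> length W \<Longrightarrow> is_path H z (take k W) (endv H z (take k W))"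
proof -
  assume "k \<le> length W"
  from Wp have "is_path H z (take k W @ drop k W) z'" by (simp only: append_take_drop_id)
  then obtain w where "is_path H z (take k W) w" using is_path_append[OF wf] by blast
  then show ?thesis using is_path_endv by metis
qed

lemma vk_path: "k \<le> length W \<Longrightarrow> is_path H z (vk k) (endv H z (take k W))"
  unfolding vk_def
  by (rule Rd_path[OF wf _ take_path]) (auto intro: is_path_src[OF wf Wp])

lemma vk_endv: "k \<le> length W \<Longrightarrow> endv H z (vk k) = endv H z (take k W)"
  using vk_path is_path_endv by metis

lemma code_V: "c \<in> V \<Longrightarrow> vk (code c) = c \<and> code c \<le> length W"
proof -
  assume "c \<in> V"
  then obtain k where k: "k \<le> length W" "vk k = c" by (auto simp: V_def)
  then have "vk (code c) = c" unfolding code_def by (intro LeastI[of "\<lambda>k. vk k = c"]) simp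
  moreover have "code c \<le> k" unfolding code_def using k by (intro Least_le) simp
  ultimately show ?thesis using k by simp
qed

lemma code_inj: "c \<in> V \<Longrightarrow> d \<in> V \<Longrightarrow> code c = code d \<Longrightarrow> c = d"
  using code_V by metis

lemma V_reduced: "c \<in> V \<Longrightarrow> reduced H c"
  using code_V vk_reduced by metis

lemma V_path: "c \<in> V \<Longrightarrow> is_path H z c (endv H z c)"
  using code_V vk_path vk_endv by metis

lemma vk_V: "k \<le> length W \<Longrightarrow> vk k \<in> V" by (simp add: V_def)

lemma prefix_closed: "k \<le> length W \<Longrightarrow> j \<le> length (vk k) \<Longrightarrow> take j (vk k) \<in> V"
proof (induction k arbitrary: j)
  case 0 then show ?case using vk_V[of 0] by (simp add: vk_0)
next
  case (Suc k)
  have ps: "vk (Suc k) = pushG H (vk k) (W!k)" using Suc vk_Suc by simp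
  show ?case
  proof (cases "vk k \<noteq> [] \<and> last (vk k) = einv H (W!k)")
    case True
    then have "vk (Suc k) = butlast (vk k)" using ps by (simp add: pushG_def)
    moreover have "j < length (vk k)"
    proof -
      have l: "length (vk (Suc k)) = length (vk k) - 1" using calculation by simp
      have "length (vk k) \<noteq> 0" using True by simp
      then show ?thesis using l Suc.prems(2) by linarith
    qed
    ultimately show ?thesis using Suc by (auto simp: take_butlast)
  next
    case False
    then have e: "vk (Suc k) = vk k @ [W!k]" unfolding ps pushG_def by (rule if_not_P)
    show ?thesis
    proof (cases "j \<le> length (vk k)")
      case True then show ?thesis using Suc e by simp
    next
      case False
      then have "j = length (vk (Suc k))" using Suc.prems e by simp
      then show ?thesis using vk_V[OF Suc.prems(1)] by simp
    qed
  qed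
qed

lemma butlast_V: "c \<in> V \<Longrightarrow> butlast c \<in> V"
  using prefix_closed[of _ "length c - 1"] by (auto simp: V_def butlast_conv_take)

lemma Nil_V: "[] \<in> V" using vk_V[of 0] by (simp add: vk_0)

definition tE :: "nat set" where
  "tE = {n. \<exists>c d. c \<in> V \<and> c \<noteq> [] \<and> d < 2 \<and> n = 2 * code c + d}"

definition hE :: "nat \<Rightarrow> 'e" where
  "hE n = (if even n then einv H (last (vk (n div 2))) else last (vk (n div 2)))"

definition T :: "(nat, nat, 'b) lgraph" where
  "T = \<lparr> verts = code ` V, edges = tE,
         src = (\<lambda>n. if even n then code (vk (n div 2)) else code (butlast (vk (n div 2)))),
         einv = (\<lambda>n. if even n then Suc n else n - 1),
         lab = (\<lambda>n. lab H (hE n)) \<rparr>"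

lemma tE_cases:
  assumes "n \<in> tE"
  obtains c where "c \<in> V" "c \<noteq> []" "n = 2 * code c" "even n" "vk (n div 2) = c"
        | c where "c \<in> V" "c \<noteq> []" "n = 2 * code c + 1" "odd n" "vk (n div 2) = c"
proof -
  from assms obtain c d where c: "c \<in> V" "c \<noteq> []" "d < 2" "n = 2 * code c + d" by (auto simp: tE_def)
  show thesis
  proof (cases "d = 0")
    case True then show ?thesis using that(1)[of c] c code_V[OF c(1)] by simp
  next
    case False then have "d = 1" using c by simp
    then show ?thesis using that(2)[of c] c code_V[OF c(1)] by simp
  qed
qed

lemma last_edge: "c \<in> V \<Longrightarrow> c \<noteq> [] \<Longrightarrow> last c \<in> edges H"
  using V_reduced[of c] by (auto simp: reduced_def)

lemma T_simps: "verts T = code ` V" "edges T = tE"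
  "src T n = (if even n then code (vk (n div 2)) else code (butlast (vk (n div 2))))"
  "einv T n = (if even n then Suc n else n - 1)"
  "lab T n = lab H (hE n)"
  by (simp_all add: T_def)

lemma T_wf: "wf_lgraph T"
  unfolding wf_lgraph_def
proof (intro ballI conjI)
  fix n assume n: "n \<in> edges T"
  then have n': "n \<in> tE" by (simp add: T_simps)
  show "src T n \<in> verts T" using n'
  proof (cases rule: tE_cases)
    case (1 c) then show ?thesis by (simp add: T_simps)
  next
    case (2 c) then show ?thesis using butlast_V[OF 2(1)] by (simp add: T_simps)
  qed
  show "einv T n \<in> edges T" using n'
  proof (cases rule: tE_cases)
    case (1 c) then show ?thesis unfolding T_simps tE_def
      by (intro CollectI exI[of _ c] exI[of _ 1]) simp
  next
    case (2 c) then show ?thesis unfolding T_simps tE_def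
      by (intro CollectI exI[of _ c] exI[of _ 0]) simp
  qed
  show "einv T (einv T n) = n" using n'
    by (cases rule: tE_cases) (simp_all add: T_simps)
  show "einv T n \<noteq> n" using n'
    by (cases rule: tE_cases) (simp_all add: T_simps)
  show "lab T (einv T n) = inv_label (lab T n)" using n'
  proof (cases rule: tE_cases)
    case (1 c)
    then have "(Suc n) div 2 = n div 2" by simp
    then show ?thesis using 1 wfD[OF wf last_edge[OF 1(1,2)]]
      by (simp add: T_simps hE_def inv_label_def)
  next
    case (2 c)
    then have "(n - 1) div 2 = n div 2" "even (n - 1)" by auto
    then show ?thesis using 2 wfD[OF wf last_edge[OF 2(1,2)]]
      by (simp add: T_simps hE_def inv_label_def)
  qed
qed

end

lemma path_consec:
  "is_path G u q v \<Longrightarrow> Suc i < length q \<Longrightarrow> src G (q ! Suc i) = tgt G (q ! i)"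
proof (induction q arbitrary: u i)
  case Nil then show ?case by simp
next
  case (Cons e q)
  show ?case
  proof (cases i)
    case 0 then show ?thesis using Cons.prems by (cases q) auto
  next
    case (Suc j) then show ?thesis using Cons by auto
  qed
qed

context tree_ctx
begin

lemma vk_code: "c \<in> V \<Longrightarrow> vk (code c) = c" using code_V by blast

lemma V_snoc_reduced:
  assumes c: "c \<in> V" "c \<noteq> []" "butlast c \<noteq> []"
  shows "last c \<noteq> einv H (last (butlast c))"
proof -
  have "reduced H (butlast c @ [last c])" using V_reduced[OF c(1)] c(2) by simp
  then show ?thesis using c(3) by (simp add: reduced_def immersed_snoc)
qed

lemma tgt_T: "tgt T n = src T (einv T n)" by (simp add: tgt_def)

lemma tE_edges: "n \<in> tE \<Longrightarrow> hE n \<in> edges H"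
  by (cases rule: tE_cases) (auto simp: hE_def intro: last_edge wfD(2)[OF wf])

lemma T_step:
  assumes n: "n \<in> tE" and x: "x \<in> verts T" and s: "src T n = x"
  shows "pushG H (vk x) (hE n) = vk (tgt T n) \<and> tgt T n \<in> verts T"
  using n
proof (cases rule: tE_cases)
  case (1 c)
  have x': "x = code c" using s 1 by (simp add: T_simps)
  have e: "last c \<in> edges H" using last_edge 1 by simp
  have p: "pushG H (vk x) (hE n) = butlast c"
    using 1 x' vk_code[OF 1(1)] wfD(3)[OF wf e] by (simp add: hE_def pushG_def)
  have t: "tgt T n = code (butlast c)" using 1 by (simp add: tgt_T T_simps)
  show ?thesis using p t vk_code[OF butlast_V[OF 1(1)]] butlast_V[OF 1(1)] by (simp add: T_simps)
next
  case (2 c)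
  have x': "x = code (butlast c)" using s 2 by (simp add: T_simps)
  have e: "last c \<in> edges H" using last_edge 2 by simp
  have nc: "\<not> (butlast c \<noteq> [] \<and> last (butlast c) = einv H (last c))"
  proof
    assume a: "butlast c \<noteq> [] \<and> last (butlast c) = einv H (last c)"
    then have "einv H (last (butlast c)) = last c" using wfD(3)[OF wf e] by simp
    then show False using V_snoc_reduced[OF 2(1,2)] a by simp
  qed
  have pp: "pushG H (butlast c) (last c) = butlast c @ [last c]"
    unfolding pushG_def by (rule if_not_P[OF nc])
  have p: "pushG H (vk x) (hE n) = c"
    using 2 x' vk_code[OF butlast_V[OF 2(1)]] pp by (simp add: hE_def)
  have "(n - 1) div 2 = n div 2" "even (n - 1)" using 2 by auto
  then have t: "tgt T n = code c" using 2 by (simp add: tgt_T T_simps)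
  show ?thesis using p t vk_code[OF 2(1)] 2(1) by (simp add: T_simps)
qed

lemma T_path_Rd:
  "is_path T x q y \<Longrightarrow> x \<in> verts T \<Longrightarrow> Rd H (vk x) (map hE q) = vk y"
proof (induction q arbitrary: x)
  case Nil then show ?case by simp
next
  case (Cons n q)
  then have n: "n \<in> tE" "src T n = x" "is_path T (tgt T n) q y" by (auto simp: T_simps)
  from T_step[OF n(1) Cons.prems(2) n(2)] Cons.IH[OF n(3)] show ?case by simp
qed

lemma hE_pair:
  assumes n1: "n1 \<in> tE" and n2: "n2 \<in> tE" and t: "tgt T n1 = src T n2" and ne: "n2 \<noteq> einv T n1"
  shows "hE n2 \<noteq> einv H (hE n1)"
  using n1
proof (cases rule: tE_cases)
  case (1 c1)
  have e1: "last c1 \<in> edges H" using last_edge 1 by simp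
  have t1: "tgt T n1 = code (butlast c1)" using 1 by (simp add: tgt_T T_simps)
  show ?thesis using n2
  proof (cases rule: tE_cases)
    case (1 c2)
    note c1 = \<open>c1 \<in> V\<close> \<open>c1 \<noteq> []\<close> \<open>n1 = 2 * code c1\<close> \<open>even n1\<close> \<open>vk (n1 div 2) = c1\<close>
    have "code c2 = code (butlast c1)" using t t1 1 by (simp add: T_simps)
    then have c2: "c2 = butlast c1" using code_inj 1 butlast_V[OF c1(1)] by blast
    have "last c1 \<noteq> einv H (last c2)" using V_snoc_reduced[OF c1(1,2)] c2 1 by simp
    moreover have "einv H (last c2) \<in> edges H \<Longrightarrow> True" by simp
    ultimately show ?thesis using 1 c1 wfD(3)[OF wf e1] last_edge[OF 1(1,2)] wfD(3)[OF wf]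
      by (auto simp: hE_def)
  next
    case (2 c2)
    note c1 = \<open>c1 \<in> V\<close> \<open>c1 \<noteq> []\<close> \<open>n1 = 2 * code c1\<close> \<open>even n1\<close> \<open>vk (n1 div 2) = c1\<close>
    have "code (butlast c2) = code (butlast c1)" using t t1 2 by (simp add: T_simps)
    then have bb: "butlast c2 = butlast c1" using code_inj butlast_V 2 c1 by blast
    show ?thesis
    proof
      assume "hE n2 = einv H (hE n1)"
      then have "last c2 = last c1" using 2 c1 wfD(3)[OF wf e1] by (simp add: hE_def)
      then have "c2 = c1" using bb 2 c1 by (metis append_butlast_last_id)
      then have "n2 = einv T n1" using 2 c1 by (simp add: T_simps)
      then show False using ne by simp
    qed
  qed
next
  case (2 c1)
  have e1: "last c1 \<in> edges H" using last_edge 2 by simp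
  have "(n1 - 1) div 2 = n1 div 2" "even (n1 - 1)" using 2 by auto
  then have t1: "tgt T n1 = code c1" using 2 by (simp add: tgt_T T_simps)
  show ?thesis using n2
  proof (cases rule: tE_cases)
    case (1 c2)
    note c1 = \<open>c1 \<in> V\<close> \<open>c1 \<noteq> []\<close> \<open>n1 = 2 * code c1 + 1\<close> \<open>odd n1\<close> \<open>vk (n1 div 2) = c1\<close>
    have "code c2 = code c1" using t t1 1 by (simp add: T_simps)
    then have "c2 = c1" using code_inj 1 c1 by blast
    then have "n2 = einv T n1" using 1 c1 by (simp add: T_simps)
    then show ?thesis using ne by simp
  next
    case (2 c2)
    note c1 = \<open>c1 \<in> V\<close> \<open>c1 \<noteq> []\<close> \<open>n1 = 2 * code c1 + 1\<close> \<open>odd n1\<close> \<open>vk (n1 div 2) = c1\<close>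
    have "code (butlast c2) = code c1" using t t1 2 by (simp add: T_simps)
    then have bc: "butlast c2 = c1" using code_inj butlast_V 2 c1 by blast
    have "last c2 \<noteq> einv H (last c1)" using V_snoc_reduced[OF 2(1,2)] bc c1 by simp
    then show ?thesis using 2 c1 by (simp add: hE_def)
  qed
qed

lemma T_immersed_reduced:
  assumes p: "is_path T x q y" and im: "immersed T q"
  shows "reduced H (map hE q)"
proof -
  have qe: "set q \<subseteq> tE" using is_path_edges[OF p] by (simp add: T_simps)
  have "set (map hE q) \<subseteq> edges H" using qe tE_edges by auto
  moreover have "immersed H (map hE q)"
    unfolding immersed_def
  proof (intro allI impI)
    fix i assume i: "Suc i < length (map hE q)"
    then have i': "Suc i < length q" by simp
    have "q ! i \<in> tE" "q ! Suc i \<in> tE" using qe i' by auto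
    moreover have "tgt T (q!i) = src T (q ! Suc i)" using path_consec[OF p i'] by simp
    moreover have "q ! Suc i \<noteq> einv T (q ! i)" using im i' by (simp add: immersed_def)
    ultimately have "hE (q ! Suc i) \<noteq> einv H (hE (q!i))" by (rule hE_pair)
    then show "map hE q ! Suc i \<noteq> einv H (map hE q ! i)" using i' by simp
  qed
  ultimately show ?thesis by (simp add: reduced_def)
qed

lemma root_path: "c \<in> V \<Longrightarrow> \<exists>p. is_path T (code []) p (code c)"
proof (induction "length c" arbitrary: c)
  case 0 then show ?case using Nil_V by (intro exI[of _ "[]"]) (simp add: T_simps)
next
  case (Suc l)
  then have c: "c \<noteq> []" by auto
  have bV: "butlast c \<in> V" using butlast_V Suc by simp
  have l: "l = length (butlast c)" using Suc.hyps(2) by simp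
  obtain p where p: "is_path T (code []) p (code (butlast c))" using Suc.hyps(1)[OF l bV] by blast
  define n where "n = 2 * code c + 1"
  have nE: "n \<in> tE" unfolding n_def tE_def using Suc.prems c
    by (intro CollectI exI[of _ c] exI[of _ 1]) simp
  have "n div 2 = code c" "odd n" "(n - 1) div 2 = code c" "even (n - 1)" unfolding n_def by auto
  then have "src T n = code (butlast c)" "tgt T n = code c"
    using vk_code[OF Suc.prems] by (simp_all add: tgt_T T_simps)
  then have "is_path T (code (butlast c)) [n] (code c)" using nE Suc.prems by (simp add: T_simps)
  then have "is_path T (code []) (p @ [n]) (code c)" using p is_path_append[OF T_wf] by blast
  then show ?case by blast
qed

lemma T_connected: "connected_lg T"
  unfolding connected_lg_def
proof (intro conjI ballI)
  show "verts T \<noteq> {}" using Nil_V by (auto simp: T_simps)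
  fix u v assume u: "u \<in> verts T" and v: "v \<in> verts T"
  then obtain cu cv where c: "cu \<in> V" "cv \<in> V" "u = code cu" "v = code cv" by (auto simp: T_simps)
  obtain p1 where p1: "is_path T (code []) p1 u" using root_path c by blast
  obtain p2 where p2: "is_path T (code []) p2 v" using root_path c by blast
  have "is_path T u (rev_path T p1 @ p2) v"
    using is_path_rev[OF T_wf p1] p2 by (auto simp: is_path_append[OF T_wf])
  then show "\<exists>p. is_path T u p v" by blast
qed

lemma T_tree: "is_tree T"
  unfolding is_tree_def
proof (intro conjI allI impI)
  show "wf_lgraph T" by (rule T_wf)
  show "connected_lg T" by (rule T_connected)
  fix v q assume a: "is_path T v q v \<and> immersed T q"
  then have p: "is_path T v q v" and im: "immersed T q" by auto
  have v: "v \<in> verts T" using is_path_src[OF T_wf p] .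
  then obtain c where c: "c \<in> V" "v = code c" by (auto simp: T_simps)
  have r: "reduced H (map hE q)" using T_immersed_reduced[OF p im] .
  have "Rd H c (map hE q) = c" using T_path_Rd[OF p v] c vk_code by simp
  then have "Rd H [] (map hE q) = []"
    using Rd_transfer[OF wf V_reduced[OF c(1)]] r by (simp add: reduced_def)
  then have "map hE q = []" using Rd_Nil_reduced[OF r wf] by simp
  then show "q = []" by simp
qed

end

context tree_ctx
begin

definition popk :: "nat \<Rightarrow> bool" where
  "popk k \<longleftrightarrow> vk k \<noteq> [] \<and> last (vk k) = einv H (W!k)"

definition Ek :: "nat \<Rightarrow> nat" where
  "Ek k = (if popk k then 2 * code (vk k) else 2 * code (vk (Suc k)) + 1)"

lemma Ek_props:
  assumes k: "k < length W"
  shows "Ek k \<in> tE \<and> src T (Ek k) = code (vk k) \<and> tgt T (Ek k) = code (vk (Suc k)) \<and> hE (Ek k) = W!k"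
proof -
  have We': "W!k \<in> edges H" using We k by auto
  show ?thesis
  proof (cases "popk k")
    case True
    have V: "vk k \<in> V" using vk_V k by simp
    have ne: "vk k \<noteq> []" using True by (simp add: popk_def)
    have s: "vk (Suc k) = butlast (vk k)" using True vk_Suc[OF k] by (simp add: popk_def pushG_def)
    have E: "Ek k = 2 * code (vk k)" using True by (simp add: Ek_def)
    have "Ek k \<in> tE" unfolding E tE_def using V ne by (intro CollectI exI[of _ "vk k"] exI[of _ 0]) simp
    moreover have "src T (Ek k) = code (vk k)" using E vk_code[OF V] by (simp add: T_simps)
    moreover have "tgt T (Ek k) = code (vk (Suc k))" using E vk_code[OF V] s by (simp add: tgt_T T_simps)
    moreover have "hE (Ek k) = W!k" using E vk_code[OF V] True wfD(3)[OF wf We'] by (simp add: hE_def popk_def)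
    ultimately show ?thesis by blast
  next
    case False
    have V: "vk (Suc k) \<in> V" using vk_V k by simp
    have s: "vk (Suc k) = vk k @ [W!k]" using vk_Suc[OF k] False unfolding popk_def pushG_def
      by simp
    have ne: "vk (Suc k) \<noteq> []" using s by simp
    have E: "Ek k = 2 * code (vk (Suc k)) + 1" using False by (simp add: Ek_def)
    have d: "Ek k div 2 = code (vk (Suc k))" "odd (Ek k)" "(Ek k - 1) div 2 = code (vk (Suc k))" "even (Ek k - 1)"
      using E by auto
    have "Ek k \<in> tE" unfolding E tE_def using V ne by (intro CollectI exI[of _ "vk (Suc k)"] exI[of _ 1]) simp
    moreover have "src T (Ek k) = code (vk k)" using d vk_code[OF V] s by (simp add: T_simps)
    moreover have "tgt T (Ek k) = code (vk (Suc k))" using d vk_code[OF V] by (simp add: tgt_T T_simps)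
    moreover have "hE (Ek k) = W!k" using d vk_code[OF V] s by (simp add: hE_def)
    ultimately show ?thesis by blast
  qed
qed

definition gI :: "(nat \<Rightarrow> nat) \<times> (nat \<times> bool \<Rightarrow> nat)" where
  "gI = (\<lambda>k. code (vk k), \<lambda>(k, d). if d then Ek k else einv T (Ek k))"

definition hT :: "(nat \<Rightarrow> 'v) \<times> (nat \<Rightarrow> 'e)" where
  "hT = (\<lambda>n. endv H z (vk n), hE)"

lemma hE_einv: assumes "n \<in> tE" shows "hE (einv T n) = einv H (hE n)"
  using assms
proof (cases rule: tE_cases)
  case (1 c)
  have "(Suc n) div 2 = n div 2" using 1 by simp
  then show ?thesis using 1 wfD(3)[OF wf last_edge[OF 1(1,2)]] by (simp add: T_simps hE_def)
next
  case (2 c)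
  have "(n - 1) div 2 = n div 2" "even (n - 1)" using 2 by auto
  then show ?thesis using 2 by (simp add: T_simps hE_def)
qed

lemma gI_morph:
  assumes m: "Suc m = length W" and L: "\<forall>k\<le>m. L k = lab H (W!k)"
  shows "strict_morphism (interval_graph m L) T gI"
  unfolding strict_morphism_def
proof (intro conjI ballI)
  fix v assume "v \<in> verts (interval_graph m L)"
  then have "v \<le> length W" using m by (simp add: interval_graph_def)
  then show "fst gI v \<in> verts T" using vk_V by (simp add: gI_def T_simps)
next
  fix e assume "e \<in> edges (interval_graph m L)"
  then obtain k d where e: "e = (k, d)" "k \<le> m" by (auto simp: interval_graph_def)
  then have k: "k < length W" using m by simp
  note P = Ek_props[OF k]
  have ET: "Ek k \<in> edges T" using P by (simp add: T_simps)
  have wfT: "wf_lgraph T" by (rule T_wf)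
  show "snd gI e \<in> edges T"
    using e ET wfD(2)[OF wfT ET] by (cases d) (auto simp: gI_def)
  show "src T (snd gI e) = fst gI (src (interval_graph m L) e)"
    using e P by (cases d) (auto simp: gI_def interval_graph_def tgt_T)
  show "snd gI (einv (interval_graph m L) e) = einv T (snd gI e)"
    using e wfD(3)[OF wfT ET] by (cases d) (auto simp: gI_def interval_graph_def)
  show "lab T (snd gI e) = lab (interval_graph m L) e"
    using e P L wfD(5)[OF wfT ET] by (cases d) (auto simp: gI_def interval_graph_def T_simps)
qed

lemma hT_morph: "strict_morphism T H hT"
  unfolding strict_morphism_def
proof (intro conjI ballI)
  fix v assume "v \<in> verts T"
  then obtain c where c: "c \<in> V" "v = code c" by (auto simp: T_simps)
  show "fst hT v \<in> verts H" using is_path_edges[OF V_path[OF c(1)]] c vk_code[OF c(1)] by (simp add: hT_def)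
next
  fix n assume "n \<in> edges T"
  then have n: "n \<in> tE" by (simp add: T_simps)
  show "snd hT n \<in> edges H" using tE_edges[OF n] by (simp add: hT_def)
  show "snd hT (einv T n) = einv H (snd hT n)" using hE_einv[OF n] by (simp add: hT_def)
  show "lab H (snd hT n) = lab T n" by (simp add: hT_def T_simps)
  show "src H (snd hT n) = fst hT (src T n)" using n
  proof (cases rule: tE_cases)
    case (1 c)
    then show ?thesis using vk_code[OF 1(1)] by (simp add: hT_def hE_def T_simps endv_def tgt_def)
  next
    case (2 c)
    have bV: "butlast c \<in> V" using butlast_V 2 by simp
    have "is_path H z (butlast c @ [last c]) (endv H z c)" using V_path[OF 2(1)] 2 by simp
    then obtain w where "is_path H z (butlast c) w" "is_path H w [last c] (endv H z c)"
      using is_path_append[OF wf] by blast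
    then have "src H (last c) = endv H z (butlast c)" using is_path_endv by fastforce
    then show ?thesis using 2 vk_code[OF bV] by (simp add: hT_def hE_def T_simps)
  qed
qed

end

lemma tree_exists:
  assumes wf: "wf_lgraph H" and Wp: "is_path H z W z'"
    and Wf: "W = f # W' @ [einv H f]" and null: "Rd H [] W' = []"
    and m: "Suc m = length W" and L: "\<forall>k\<le>m. L k = lab H (W!k)"
  shows "\<exists>(T :: (nat, nat, 'b) lgraph) g' h. is_tree T \<and>
     strict_morphism (interval_graph m L) T g' \<and> strict_morphism T H h \<and>
     (\<forall>x\<le>Suc m. fst h (fst g' x) = endv H z (take x W)) \<and>
     (\<forall>k\<le>m. snd h (snd g' (k, True)) = W!k \<and> snd h (snd g' (k, False)) = einv H (W!k)) \<and>
     snd g' (0, True) = snd g' (m, False)"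
proof -
  interpret tree_ctx H W z z' using wf Wp by unfold_locales
  have fe: "f \<in> edges H" using We Wf by auto
  have endpts: "snd gI (0, True) = snd gI (m, False)"
  proof -
    have v1: "vk 1 = [f]" unfolding vk_def using Wf by (simp add: pushG_def)
    have np0: "\<not> popk 0" by (simp add: popk_def vk_0)
    have E0: "Ek 0 = 2 * code [f] + 1" using np0 v1 by (simp add: Ek_def)
    have mW: "m = Suc (length W')" using m Wf by simp
    have rf: "reduced H [f]" using fe by (simp add: reduced_def immersed_def)
    have W'e: "set W' \<subseteq> edges H" using We Wf by auto
    have vm: "vk m = [f]"
    proof -
      have "take m W = f # W'" using Wf mW by simp
      then have "vk m = Rd H [f] W'" by (simp add: vk_def pushG_def)
      then show ?thesis using Rd_null[OF wf rf W'e null] by simp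
    qed
    have Wm: "W ! m = einv H f" using Wf mW by (simp add: nth_append)
    have pm: "popk m" using vm Wm wfD(3)[OF wf fe] by (simp add: popk_def)
    have Em: "Ek m = 2 * code [f]" using pm vm by (simp add: Ek_def)
    show ?thesis using E0 Em by (simp add: gI_def T_simps)
  qed
  have comm1: "\<forall>x\<le>Suc m. fst hT (fst gI x) = endv H z (take x W)"
  proof (intro allI impI)
    fix x assume "x \<le> Suc m"
    then have x: "x \<le> length W" using m by simp
    show "fst hT (fst gI x) = endv H z (take x W)"
      using vk_code[OF vk_V[OF x]] vk_endv[OF x] by (simp add: hT_def gI_def)
  qed
  have comm2: "\<forall>k\<le>m. snd hT (snd gI (k, True)) = W!k \<and> snd hT (snd gI (k, False)) = einv H (W!k)"
  proof (intro allI impI)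
    fix k assume "k \<le> m"
    then have k: "k < length W" using m by simp
    show "snd hT (snd gI (k, True)) = W!k \<and> snd hT (snd gI (k, False)) = einv H (W!k)"
      using Ek_props[OF k] hE_einv[of "Ek k"] by (simp add: hT_def gI_def)
  qed
  show ?thesis
    using T_tree gI_morph[OF m L] hT_morph comm1 comm2 endpts by blast
qed

lemma is_path_mid:
  assumes wf: "wf_lgraph G" and p: "is_path G u (A @ B @ C) v"
  shows "\<exists>u' v'. is_path G u' B v'"
  using p is_path_append[OF wf] by blast

lemma is_path_remove_loop:
  assumes wf: "wf_lgraph G" and p: "is_path G u (A @ (e # B @ [e']) @ C) v" and ee: "e' = einv G e"
  shows "is_path G u (A @ C) v"
proof -
  obtain a where a: "is_path G u A a" "is_path G a ((e # B @ [e']) @ C) v"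
    using p is_path_append[OF wf] by blast
  then obtain b where b: "is_path G a (e # B @ [e']) b" "is_path G b C v"
    using is_path_append[OF wf] by blast
  have e: "e \<in> edges G" "src G e = a" using b(1) by auto
  obtain c where "is_path G c [e'] b" using b(1) is_path_append[OF wf, of a "e # B" "[e']" b] by auto
  then have "b = tgt G e'" by auto
  also have "\<dots> = a" using ee wfD(3)[OF wf e(1)] e(2) by (simp add: tgt_def)
  finally show ?thesis using a(1) b(2) is_path_append[OF wf] by blast
qed

lemma take_path_gen:
  assumes wf: "wf_lgraph G" and p: "is_path G u P v" and k: "k \<le> length P"
  shows "is_path G u (take k P) (endv G u (take k P))"
proof -
  from p have "is_path G u (take k P @ drop k P) v" by (simp only: append_take_drop_id)
  then obtain w where "is_path G u (take k P) w" using is_path_append[OF wf] by blast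
  then show ?thesis using is_path_endv by metis
qed

lemma src_nth_endv:
  assumes wf: "wf_lgraph G" and p: "is_path G u P v" and k: "k < length P"
  shows "src G (P!k) = endv G u (take k P)"
proof -
  have "is_path G u (take (Suc k) P) (endv G u (take (Suc k) P))" using take_path_gen[OF wf p] k by simp
  then have "is_path G u (take k P @ [P!k]) (endv G u (take (Suc k) P))" using k by (simp add: take_Suc_conv_app_nth)
  then obtain w where "is_path G u (take k P) w" "is_path G w [P!k] (endv G u (take (Suc k) P))"
    using is_path_append[OF wf] by blast
  then show ?thesis using is_path_endv by fastforce
qed

lemma tgt_nth_endv:
  assumes k: "k < length P"
  shows "tgt G (P!k) = endv G u (take (Suc k) P)"
  using k by (simp add: endv_def take_Suc_conv_app_nth)

lemma endv_morph:
  assumes wf: "wf_lgraph G" and f: "strict_morphism G H f" and p: "is_path G u P v"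
  shows "fst f (endv G u P) = endv H (fst f u) (map (snd f) P)"
proof -
  have "v = endv G u P" using is_path_endv[OF p] .
  moreover have "fst f v = endv H (fst f u) (map (snd f) P)" using is_path_endv[OF morph_path[OF wf f p]] .
  ultimately show ?thesis by simp
qed

lemma immersed_Cons:
  "immersed G (a # l) \<longleftrightarrow> immersed G l \<and> (l \<noteq> [] \<longrightarrow> hd l \<noteq> einv G a)"
  unfolding immersed_def
  by (cases l) (auto simp: nth_Cons split: nat.splits)

locale mctx =
  fixes S0 :: "('v0, 'e0, 'b) lgraph" and S1 :: "('v1, 'e1, 'b) lgraph"
    and g :: "('v0 \<Rightarrow> 'v1) \<times> ('e0 \<Rightarrow> 'e1)" and b :: 'b
  assumes wf0: "wf_lgraph S0" and wf1: "wf_lgraph S1" and gm: "strict_morphism S0 S1 g"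
begin

abbreviation GG :: "'e0 list \<Rightarrow> 'e1 list" where "GG w \<equiv> map (snd g) w"

lemma g_edge: "e \<in> edges S0 \<Longrightarrow> snd g e \<in> edges S1 \<and> snd g (einv S0 e) = einv S1 (snd g e) \<and> lab S1 (snd g e) = lab S0 e"
  using gm by (simp add: strict_morphism_def)

lemma lab_einv_fst: "wf_lgraph G \<Longrightarrow> e \<in> edges G \<Longrightarrow> fst (lab G (einv G e)) = fst (lab G e)"
  by (simp add: wfD(5) inv_label_def)

definition good :: bool where
  "good \<longleftrightarrow> (\<exists>x w y u v b'. is_path S0 u (x # w @ [y]) v \<and> immersed S0 (x # w @ [y]) \<and>
     lab S0 x = b' \<and> lab S0 y = inv_label b' \<and> fst b' = b \<and> (\<forall>e\<in>set w. fst (lab S0 e) \<noteq> b) \<and>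
     snd g y = einv S1 (snd g x) \<and> Rd S1 [] (GG w) = [])"

end

lemma pushG_app: "\<not> (s \<noteq> [] \<and> last s = einv G a) \<Longrightarrow> pushG G s a = s @ [a]"
  unfolding pushG_def by (rule if_not_P)
lemma pushG_pop: "s \<noteq> [] \<and> last s = einv G a \<Longrightarrow> pushG G s a = butlast s"
  unfolding pushG_def by (rule if_P)

context mctx
begin

definition isbH :: "'e1 \<Rightarrow> bool" where "isbH a \<longleftrightarrow> fst (lab S1 a) = b"
definition tt :: "'e1 list \<Rightarrow> nat \<Rightarrow> 'e1 list" where "tt W k = Rd S1 [] (take k W)"

lemma tt_Suc: "k < length W \<Longrightarrow> tt W (Suc k) = pushG S1 (tt W k) (W!k)"
  by (simp add: tt_def take_Suc_conv_app_nth)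

lemma tt_0: "tt W 0 = []" by (simp add: tt_def)

lemma tt_seg: "k1 \<le> k2 \<Longrightarrow> Rd S1 (tt W k1) (take (k2 - k1) (drop k1 W)) = tt W k2"
proof -
  assume "k1 \<le> k2"
  then have "take k2 W = take k1 W @ take (k2 - k1) (drop k1 W)"
    by (metis le_add_diff_inverse take_add)
  then show ?thesis by (simp add: tt_def)
qed

lemma isbH_einv: "a \<in> edges S1 \<Longrightarrow> isbH (einv S1 a) = isbH a"
  using lab_einv_fst[OF wf1] by (simp add: isbH_def)

lemma stretch:
  assumes We: "set W \<subseteq> edges S1" and kW: "k \<le> length W" and k1: "k1 \<le> k"
    and nb: "\<forall>l. k1 \<le> l \<and> l < k \<longrightarrow> \<not> isbH (W!l)"
    and t1: "tt W k1 = p @ q" and q: "\<forall>a\<in>set q. \<not> isbH a" and p: "p = [] \<or> isbH (last p)"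
  shows "\<exists>q'. tt W k = p @ q' \<and> (\<forall>a\<in>set q'. \<not> isbH a)"
  using kW k1 nb
proof (induction k)
  case 0 then show ?case using t1 q by auto
next
  case (Suc k)
  show ?case
  proof (cases "k1 = Suc k")
    case True then show ?thesis using t1 q by auto
  next
    case False
    then have k1k: "k1 \<le> k" using Suc.prems by simp
    obtain q' where q': "tt W k = p @ q'" "\<forall>a\<in>set q'. \<not> isbH a" using Suc k1k by auto
    have kl: "k < length W" using Suc.prems by simp
    have c: "W!k \<in> edges S1" "\<not> isbH (W!k)" using We kl Suc.prems k1k by auto
    have ts: "tt W (Suc k) = pushG S1 (p @ q') (W!k)" using tt_Suc[OF kl] q' by simp
    show ?thesis
    proof (cases "p @ q' \<noteq> [] \<and> last (p @ q') = einv S1 (W!k)")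
      case True
      have "q' \<noteq> []"
      proof
        assume "q' = []"
        then have "p \<noteq> []" "last p = einv S1 (W!k)" using True by auto
        then have "isbH (einv S1 (W!k))" using p by auto
        then show False using c isbH_einv by simp
      qed
      then have "tt W (Suc k) = p @ butlast q'" using ts True by (simp add: pushG_def butlast_append)
      then show ?thesis using q'(2) by (auto dest: in_set_butlastD)
    next
      case False
      then have "pushG S1 (p@q') (W!k) = (p@q') @ [W!k]" unfolding pushG_def by (rule if_not_P)
      then have "tt W (Suc k) = p @ (q' @ [W!k])" using ts by simp
      then show ?thesis using q'(2) c by auto
    qed
  qed
qed

lemma bpair:
  assumes We: "set W \<subseteq> edges S1" and null: "Rd S1 [] W = []" and ex: "\<exists>k<length W. isbH (W!k)"
  shows "\<exists>i j. i < j \<and> j < length W \<and> isbH (W!i) \<and> isbH (W!j) \<and> (\<forall>l. i < l \<and> l < j \<longrightarrow> \<not> isbH (W!l)) \<and>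
     W!j = einv S1 (W!i) \<and> tt W (Suc i) = tt W i @ [W!i] \<and> tt W j = tt W (Suc i) \<and> tt W (Suc j) = tt W i"
proof -
  have ttN: "tt W (length W) = []" using null by (simp add: tt_def)
  define k0 where "k0 = (LEAST k. k < length W \<and> isbH (W!k))"
  have k0: "k0 < length W" "isbH (W!k0)" unfolding k0_def using LeastI_ex[OF ex] by auto
  have bef: "\<forall>l. 0 \<le> l \<and> l < k0 \<longrightarrow> \<not> isbH (W!l)"
    using k0 not_less_Least unfolding k0_def by (metis (no_types, lifting) order.strict_trans)
  obtain q0 where q0: "tt W k0 = [] @ q0" "\<forall>a\<in>set q0. \<not> isbH a"
    using stretch[OF We _ _ bef, of "[]" "[]"] k0 tt_0 by auto
  have up0: "tt W (Suc k0) = tt W k0 @ [W!k0]"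
  proof -
    have "\<not> (tt W k0 \<noteq> [] \<and> last (tt W k0) = einv S1 (W!k0))"
    proof
      assume a: "tt W k0 \<noteq> [] \<and> last (tt W k0) = einv S1 (W!k0)"
      then have "last (tt W k0) \<in> set q0" using q0 last_in_set[of q0] by simp
      moreover have "W!k0 \<in> edges S1" using We k0 by auto
      then have "isbH (einv S1 (W!k0))" using isbH_einv k0 by simp
      ultimately show False using a q0 by auto
    qed
    then show ?thesis using tt_Suc[OF k0(1)] pushG_app by metis
  qed
  define UP where "UP = {k. k < length W \<and> isbH (W!k) \<and> tt W (Suc k) = tt W k @ [W!k]}"
  have UPf: "finite UP" unfolding UP_def by simp
  have k0UP: "k0 \<in> UP" unfolding UP_def using k0 up0 by simp
  define i where "i = Max UP"
  have iUP: "i \<in> UP" unfolding i_def using UPf k0UP Max_in by blast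
  then have i: "i < length W" "isbH (W!i)" "tt W (Suc i) = tt W i @ [W!i]" unfolding UP_def by auto
  have imax: "\<And>k. k \<in> UP \<Longrightarrow> k \<le> i" unfolding i_def using UPf by simp
  define p where "p = tt W (Suc i)"
  have pl: "p = [] \<or> isbH (last p)" using i by (simp add: p_def)
  define J where "J = {k. i < k \<and> k < length W \<and> isbH (W!k)}"
  have Jne: "J \<noteq> {}"
  proof
    assume J: "J = {}"
    have "\<forall>l. Suc i \<le> l \<and> l < length W \<longrightarrow> \<not> isbH (W!l)" using J unfolding J_def by auto
    then obtain q' where "tt W (length W) = p @ q'"
      using stretch[OF We order.refl _ _ _ _ pl, of "Suc i" "[]"] i(1) p_def by auto
    then show False using ttN p_def i by simp
  qed
  define j where "j = Min J"
  have Jf: "finite J" unfolding J_def by simp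
  have jJ: "j \<in> J" unfolding j_def using Jf Jne Min_in by blast
  then have j: "i < j" "j < length W" "isbH (W!j)" unfolding J_def by auto
  have between: "\<forall>l. i < l \<and> l < j \<longrightarrow> \<not> isbH (W!l)"
  proof (intro allI impI)
    fix l assume l: "i < l \<and> l < j"
    show "\<not> isbH (W!l)"
    proof
      assume "isbH (W!l)"
      then have "l \<in> J" using l j unfolding J_def by auto
      then have "j \<le> l" unfolding j_def using Jf by simp
      then show False using l by simp
    qed
  qed
  have bt: "\<forall>l. Suc i \<le> l \<and> l < j \<longrightarrow> \<not> isbH (W!l)" using between by auto
  obtain q' where q': "tt W j = p @ q'" "\<forall>a\<in>set q'. \<not> isbH a"
    using stretch[OF We _ _ bt, of p "[]"] j i(1) p_def pl by auto
  have notup: "tt W (Suc j) \<noteq> tt W j @ [W!j]"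
  proof
    assume "tt W (Suc j) = tt W j @ [W!j]"
    then have "j \<in> UP" using j unfolding UP_def by simp
    then show False using imax j by fastforce
  qed
  have popj: "tt W j \<noteq> [] \<and> last (tt W j) = einv S1 (W!j)"
    using notup tt_Suc[OF j(2)] pushG_app by metis
  have sj: "tt W (Suc j) = butlast (tt W j)" using popj tt_Suc[OF j(2)] pushG_pop by metis
  have Wj: "W!j \<in> edges S1" using We j by auto
  have bl: "isbH (last (tt W j))" using popj isbH_einv[OF Wj] j by simp
  have qn: "q' = []"
  proof (rule ccontr)
    assume "q' \<noteq> []"
    then have "last (tt W j) \<in> set q'" using q' by simp
    then show False using bl q' by auto
  qed
  then have tj: "tt W j = tt W i @ [W!i]" using q' i p_def by simp
  have "einv S1 (W!j) = W!i" using popj tj by simp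
  then have Wji: "W!j = einv S1 (W!i)" using wfD(3)[OF wf1 Wj] by metis
  show ?thesis
    apply (rule exI[of _ i], rule exI[of _ j])
    using j i between Wji tj sj p_def by simp
qed

end

lemma decomp2:
  assumes "i < j" "j < length w"
  shows "w = take i w @ [w!i] @ take (j - Suc i) (drop (Suc i) w) @ [w!j] @ drop (Suc j) w"
proof -
  have d: "drop (j - Suc i) (drop (Suc i) w) = drop j w" using assms by simp
  have dj: "drop j w = w!j # drop (Suc j) w" using assms by (simp add: Cons_nth_drop_Suc)
  have "drop (Suc i) w = take (j - Suc i) (drop (Suc i) w) @ [w!j] @ drop (Suc j) w"
    using append_take_drop_id[of "j - Suc i" "drop (Suc i) w"] d dj by simp
  moreover have "w = take i w @ [w!i] @ drop (Suc i) w"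
    using assms by (simp add: Cons_nth_drop_Suc id_take_nth_drop)
  ultimately show ?thesis by simp
qed

lemma decomp1:
  assumes "Suc i < length w"
  shows "w = take i w @ [w!i, w!Suc i] @ drop (Suc (Suc i)) w"
proof -
  have "drop i w = w!i # w!Suc i # drop (Suc (Suc i)) w" using assms by (simp add: Cons_nth_drop_Suc)
  then show ?thesis by (metis append_Cons append_Nil append_take_drop_id)
qed

context mctx
begin

lemma isbH_g: "e \<in> edges S0 \<Longrightarrow> isbH (snd g e) \<longleftrightarrow> fst (lab S0 e) = b"
  using g_edge by (simp add: isbH_def)

lemma core:
  "is_path S0 u (x # w @ [y]) v \<Longrightarrow> lab S0 x = b' \<Longrightarrow> lab S0 y = inv_label b' \<Longrightarrow> fst b' = b \<Longrightarrow>
   x \<noteq> einv S0 y \<Longrightarrow> snd g y = einv S1 (snd g x) \<Longrightarrow> Rd S1 [] (GG w) = [] \<Longrightarrow> good"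
proof (induction "length w" arbitrary: w x y u v b' rule: less_induct)
  case less
  note IH = less.hyps
  have pe: "set (x # w @ [y]) \<subseteq> edges S0" using is_path_edges[OF less.prems(1)] by simp
  then have we: "set w \<subseteq> edges S0" and xe: "x \<in> edges S0" and ye: "y \<in> edges S0" by auto
  have Ge: "set (GG w) \<subseteq> edges S1" using we g_edge by auto
  show "good"
  proof (cases "immersed S0 w")
    case False
    then obtain i where i: "Suc i < length w" "w ! Suc i = einv S0 (w!i)" unfolding immersed_def by blast
    define A where "A = take i w"
    define C where "C = drop (Suc (Suc i)) w"
    define e where "e = w!i"
    have wd: "w = A @ [e, einv S0 e] @ C" using decomp1[OF i(1)] i(2) unfolding A_def C_def e_def by simp
    have ee: "e \<in> edges S0" using we i unfolding e_def by auto
    have "is_path S0 u ((x # A) @ (e # [] @ [einv S0 e]) @ (C @ [y])) v" using less.prems(1) unfolding wd by simp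
    then have p2: "is_path S0 u (x # (A @ C) @ [y]) v" using is_path_remove_loop[OF wf0] by fastforce
    have Ae: "set (GG A) \<subseteq> edges S1" using Ge unfolding wd by auto
    have rA: "reduced S1 (Rd S1 [] (GG A))" using Rd_reduced[OF wf1 reduced_Nil Ae] .
    have "Rd S1 [] (GG w) = Rd S1 (pushG S1 (pushG S1 (Rd S1 [] (GG A)) (snd g e)) (einv S1 (snd g e))) (GG C)"
      using g_edge[OF ee] unfolding wd by simp
    also have "\<dots> = Rd S1 [] (GG (A @ C))" using push_cancel[OF wf1 rA] g_edge[OF ee] by simp
    finally have n2: "Rd S1 [] (GG (A @ C)) = []" using less.prems(7) by simp
    have "length w = length A + length C + 2" unfolding wd by simp
    then have "length (A @ C) < length w" by simp
    from IH[OF this p2 less.prems(2-6) n2] show ?thesis .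
  next
    case True
    note imm = True
    show ?thesis
    proof (cases "\<exists>e\<in>set w. fst (lab S0 e) = b")
      case False
      have nb: "\<forall>e\<in>set w. fst (lab S0 e) \<noteq> b" using False by blast
      have xb: "fst (lab S0 (einv S0 x)) = b" using lab_einv_fst[OF wf0 xe] less.prems by simp
      have yb: "fst (lab S0 y) = b" using less.prems by (simp add: inv_label_def)
      have "immersed S0 (x # w @ [y])"
      proof -
        have "immersed S0 (w @ [y])"
        proof -
          have "w \<noteq> [] \<Longrightarrow> y \<noteq> einv S0 (last w)"
          proof
            assume "w \<noteq> []" "y = einv S0 (last w)"
            then have "last w \<in> set w" by simp
            then have "last w \<in> edges S0" "fst (lab S0 (last w)) \<noteq> b" using nb we by auto
            then have "fst (lab S0 (einv S0 (last w))) \<noteq> b" using lab_einv_fst[OF wf0] by simp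
            then show False using yb \<open>y = _\<close> by simp
          qed
          then show ?thesis using imm by (simp add: immersed_snoc)
        qed
        moreover have "hd (w @ [y]) \<noteq> einv S0 x"
        proof (cases w)
          case Nil
          then show ?thesis using less.prems(5) wfD(3)[OF wf0 xe] by auto
        next
          case (Cons a l)
          then show ?thesis using nb xb by auto
        qed
        ultimately show ?thesis by (simp add: immersed_Cons)
      qed
      then show ?thesis unfolding good_def using less.prems nb by blast
    next
      case True
      define W where "W = GG w"
      have exW: "\<exists>k<length W. isbH (W!k)"
      proof -
        obtain e where e: "e \<in> set w" "fst (lab S0 e) = b" using True by blast
        then obtain k where "k < length w" "w!k = e" by (metis in_set_conv_nth)
        then show ?thesis using isbH_g e we unfolding W_def by (intro exI[of _ k]) auto
      qed
      obtain i j where ij: "i < j" "j < length W" "isbH (W!i)" "isbH (W!j)"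
        "W!j = einv S1 (W!i)" "tt W (Suc i) = tt W i @ [W!i]" "tt W j = tt W (Suc i)" "tt W (Suc j) = tt W i"
        using bpair[OF Ge[folded W_def] less.prems(7)[folded W_def] exW] by blast
      have jw: "j < length w" using ij W_def by simp
      define u' where "u' = take (j - Suc i) (drop (Suc i) w)"
      define A where "A = take i w"
      define D where "D = drop (Suc j) w"
      define ei where "ei = w!i"
      define ej where "ej = w!j"
      have wd: "w = A @ [ei] @ u' @ [ej] @ D" using decomp2[OF ij(1) jw] unfolding u'_def A_def D_def ei_def ej_def .
      have wie: "ei \<in> edges S0" "ej \<in> edges S0" using we ij jw unfolding ei_def ej_def by auto
      have gi: "snd g ei = W!i" "snd g ej = W!j" using ij jw W_def unfolding ei_def ej_def by auto
      have Gu: "GG u' = take (j - Suc i) (drop (Suc i) W)" unfolding u'_def W_def by (simp add: drop_map take_map)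
      have "set (take (Suc i) W) \<subseteq> edges S1" using Ge W_def by (meson order.trans set_take_subset)
      then have rS: "reduced S1 (tt W (Suc i))" unfolding tt_def
        using Rd_reduced[OF wf1 reduced_Nil] by blast
      have Gue: "set (GG u') \<subseteq> edges S1"
      proof -
        have "set (GG u') \<subseteq> set W" unfolding Gu by (meson order.trans set_take_subset set_drop_subset)
        then show ?thesis using Ge W_def by blast
      qed
      have "Rd S1 (tt W (Suc i)) (GG u') = tt W (Suc i)" using tt_seg[of "Suc i" j W] ij Gu by simp
      then have nu: "Rd S1 [] (GG u') = []"
        using Rd_transfer[OF wf1 rS Gue] by blast
      define b'' where "b'' = lab S0 ei"
      have b1: "fst b'' = b" using isbH_g[OF wie(1)] ij gi b''_def by simp
      have "lab S0 ej = lab S1 (W!j)" using g_edge[OF wie(2)] gi by simp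
      also have "\<dots> = lab S1 (einv S1 (W!i))" using ij by simp
      also have "\<dots> = inv_label (lab S1 (W!i))" using wfD(5)[OF wf1, of "W!i"] g_edge[OF wie(1)] gi by simp
      also have "\<dots> = inv_label b''" using g_edge[OF wie(1)] gi b''_def by simp
      finally have b2: "lab S0 ej = inv_label b''" .
      have gji: "snd g ej = einv S1 (snd g ei)" using gi ij by simp
      have lw: "length w = length A + length u' + length D + 2" unfolding wd by simp
      have pw: "is_path S0 u ((x # A) @ (ei # u' @ [ej]) @ (D @ [y])) v"
        using less.prems(1) unfolding wd by simp
      show ?thesis
      proof (cases "ei = einv S0 ej")
        case False
        obtain u1 v1 where p1: "is_path S0 u1 (ei # u' @ [ej]) v1" using is_path_mid[OF wf0 pw] by blast
        have "length u' < length w" using lw by simp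
        from IH[OF this p1 b''_def[symmetric] b2 b1 False gji nu] show ?thesis .
      next
        case True
        have wj: "ej = einv S0 ei" using True wfD(3)[OF wf0 wie(2)] by simp
        define w2 where "w2 = A @ D"
        have "is_path S0 u ((x # A) @ (D @ [y])) v"
          using is_path_remove_loop[OF wf0 pw wj] .
        then have p2: "is_path S0 u (x # w2 @ [y]) v" unfolding w2_def by simp
        have "Rd S1 [] W = Rd S1 (tt W (Suc j)) (drop (Suc j) W)"
          unfolding tt_def Rd_append[symmetric] by simp
        also have "\<dots> = Rd S1 (tt W i) (drop (Suc j) W)" using ij by simp
        also have "\<dots> = Rd S1 [] (GG w2)" unfolding w2_def tt_def W_def A_def D_def by (simp add: take_map drop_map)
        finally have n2: "Rd S1 [] (GG w2) = []" using less.prems(7) W_def by simp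
        have "length w2 < length w" unfolding w2_def using lw by simp
        from IH[OF this p2 less.prems(2-6) n2] show ?thesis .
      qed
    qed
  qed
qed

end

lemma inv_label_inv[simp]: "inv_label (inv_label l) = l" by (simp add: inv_label_def)

lemma sigma_morph:
  assumes wf: "wf_lgraph G" and p: "is_path G u P v" and m: "Suc m = length P"
  shows "strict_morphism (interval_graph m (\<lambda>k. lab G (P!k))) G
           (\<lambda>k. endv G u (take k P), \<lambda>(k, d). if d then P!k else einv G (P!k))"
  unfolding strict_morphism_def
proof (intro conjI ballI)
  have Pe: "set P \<subseteq> edges G" using is_path_edges[OF p] by simp
  fix x assume "x \<in> verts (interval_graph m (\<lambda>k. lab G (P!k)))"
  then have x: "x \<le> length P" using m by (simp add: interval_graph_def)
  show "fst (\<lambda>k. endv G u (take k P), \<lambda>(k, d). if d then P!k else einv G (P!k)) x \<in> verts G"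
    using is_path_edges[OF take_path_gen[OF wf p x]] by simp
next
  have Pe: "set P \<subseteq> edges G" using is_path_edges[OF p] by simp
  fix e assume "e \<in> edges (interval_graph m (\<lambda>k. lab G (P!k)))"
  then obtain k d where e: "e = (k, d)" "k \<le> m" by (auto simp: interval_graph_def)
  then have k: "k < length P" using m by simp
  have Pk: "P!k \<in> edges G" using Pe k by auto
  note W = wfD[OF wf Pk]
  let ?s = "(\<lambda>k. endv G u (take k P), \<lambda>(k, d). if d then P!k else einv G (P!k))"
  show "snd ?s e \<in> edges G" using e Pk W by (cases d) auto
  show "src G (snd ?s e) = fst ?s (src (interval_graph m (\<lambda>k. lab G (P!k))) e)"
    using e src_nth_endv[OF wf p k] tgt_nth_endv[OF k, of G u]
    by (cases d) (auto simp: interval_graph_def tgt_def)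
  show "snd ?s (einv (interval_graph m (\<lambda>k. lab G (P!k))) e) = einv G (snd ?s e)"
    using e W by (cases d) (auto simp: interval_graph_def)
  show "lab G (snd ?s e) = lab (interval_graph m (\<lambda>k. lab G (P!k))) e"
    using e W by (cases d) (auto simp: interval_graph_def)
qed

context mctx
begin

lemma good_concl:
  assumes "good"
  shows "\<exists>m L \<sigma> (T :: (nat, nat, 'b) lgraph) g' h b'.
           strict_morphism (interval_graph m L) S0 \<sigma> \<and>
           immersed S0 (map (\<lambda>i. snd \<sigma> (i, True)) [0..<Suc m]) \<and>
           is_tree T \<and>
           strict_morphism (interval_graph m L) T g' \<and>
           strict_morphism T S1 h \<and>
           (\<forall>x \<in> verts (interval_graph m L). fst g (fst \<sigma> x) = fst h (fst g' x)) \<and>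
           (\<forall>x \<in> edges (interval_graph m L). snd g (snd \<sigma> x) = snd h (snd g' x)) \<and>
           fst b' = b \<and>
           lab S0 (snd \<sigma> (0, True)) = b' \<and>
           lab S0 (einv S0 (snd \<sigma> (m, True))) = b' \<and>
           (\<forall>i. 0 < i \<and> i < m \<longrightarrow> fst (lab S0 (snd \<sigma> (i, True))) \<noteq> b) \<and>
           snd g' (0, True) = snd g' (m, False)"
proof -
  obtain x w y u v b' where G: "is_path S0 u (x # w @ [y]) v" "immersed S0 (x # w @ [y])"
    "lab S0 x = b'" "lab S0 y = inv_label b'" "fst b' = b" "\<forall>e\<in>set w. fst (lab S0 e) \<noteq> b"
    "snd g y = einv S1 (snd g x)" "Rd S1 [] (GG w) = []"
    using assms unfolding good_def by blast
  define P where "P = x # w @ [y]"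
  define m where "m = Suc (length w)"
  define L where "L = (\<lambda>k. lab S0 (P!k))"
  define \<sigma> where "\<sigma> = (\<lambda>k. endv S0 u (take k P), \<lambda>(k, d). if d then P!k else einv S0 (P!k))"
  have p: "is_path S0 u P v" using G P_def by simp
  have mP: "Suc m = length P" unfolding m_def P_def by simp
  have Pe: "set P \<subseteq> edges S0" using is_path_edges[OF p] by simp
  have sm: "strict_morphism (interval_graph m L) S0 \<sigma>"
    unfolding L_def \<sigma>_def by (rule sigma_morph[OF wf0 p mP])
  have imm: "immersed S0 (map (\<lambda>i. snd \<sigma> (i, True)) [0..<Suc m])"
  proof -
    have "map (\<lambda>i. snd \<sigma> (i, True)) [0..<Suc m] = P" unfolding \<sigma>_def mP by (simp add: map_nth)
    then show ?thesis using G P_def by simp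
  qed
  define W where "W = GG P"
  have Wp: "is_path S1 (fst g u) W (fst g v)" unfolding W_def by (rule morph_path[OF wf0 gm p])
  have Wf: "W = snd g x # GG w @ [einv S1 (snd g x)]" unfolding W_def P_def using G by simp
  have mW: "Suc m = length W" using mP W_def by simp
  have LW: "\<forall>k\<le>m. L k = lab S1 (W!k)"
  proof (intro allI impI)
    fix k assume "k \<le> m"
    then have k: "k < length P" using mP by simp
    then have "P!k \<in> edges S0" using Pe by auto
    then show "L k = lab S1 (W!k)" using g_edge k unfolding L_def W_def by simp
  qed
  obtain T :: "(nat, nat, 'b) lgraph" and g' h where T: "is_tree T"
    "strict_morphism (interval_graph m L) T g'" "strict_morphism T S1 h"
    "\<forall>x\<le>Suc m. fst h (fst g' x) = endv S1 (fst g u) (take x W)"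
    "\<forall>k\<le>m. snd h (snd g' (k, True)) = W!k \<and> snd h (snd g' (k, False)) = einv S1 (W!k)"
    "snd g' (0, True) = snd g' (m, False)"
    using tree_exists[OF wf1 Wp Wf G(8) mW LW] by blast
  have cv: "\<forall>x \<in> verts (interval_graph m L). fst g (fst \<sigma> x) = fst h (fst g' x)"
  proof
    fix z assume "z \<in> verts (interval_graph m L)"
    then have z: "z \<le> Suc m" by (simp add: interval_graph_def)
    then have zP: "z \<le> length P" using mP by simp
    have "fst g (fst \<sigma> z) = fst g (endv S0 u (take z P))" by (simp add: \<sigma>_def)
    also have "\<dots> = endv S1 (fst g u) (GG (take z P))" using endv_morph[OF wf0 gm take_path_gen[OF wf0 p zP]] .
    also have "\<dots> = endv S1 (fst g u) (take z W)" by (simp add: W_def take_map)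
    also have "\<dots> = fst h (fst g' z)" using T(4) z by simp
    finally show "fst g (fst \<sigma> z) = fst h (fst g' z)" .
  qed
  have ce: "\<forall>x \<in> edges (interval_graph m L). snd g (snd \<sigma> x) = snd h (snd g' x)"
  proof
    fix e assume "e \<in> edges (interval_graph m L)"
    then obtain k d where e: "e = (k, d)" "k \<le> m" by (auto simp: interval_graph_def)
    then have k: "k < length P" using mP by simp
    then have Pk: "P!k \<in> edges S0" using Pe by auto
    show "snd g (snd \<sigma> e) = snd h (snd g' e)"
      using T(5) e g_edge[OF Pk] k by (cases d) (auto simp: \<sigma>_def W_def)
  qed
  have l0: "lab S0 (snd \<sigma> (0, True)) = b'" using G by (simp add: \<sigma>_def P_def)
  have ye: "y \<in> edges S0" using Pe P_def by simp
  have lm: "lab S0 (einv S0 (snd \<sigma> (m, True))) = b'"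
    using G wfD(5)[OF wf0 ye] by (simp add: \<sigma>_def P_def m_def nth_append)
  have mid: "\<forall>i. 0 < i \<and> i < m \<longrightarrow> fst (lab S0 (snd \<sigma> (i, True))) \<noteq> b"
  proof (intro allI impI)
    fix i assume i: "0 < i \<and> i < m"
    then have "P!i = w!(i - 1)" "i - 1 < length w" unfolding P_def m_def by (auto simp: nth_append nth_Cons split: nat.splits)
    then show "fst (lab S0 (snd \<sigma> (i, True))) \<noteq> b" using G(6) by (simp add: \<sigma>_def)
  qed
  show ?thesis
    apply (rule exI[of _ m], rule exI[of _ L], rule exI[of _ \<sigma>], rule exI[of _ T], rule exI[of _ g'],
           rule exI[of _ h], rule exI[of _ b'])
    using sm imm T(1-3) cv ce G(5) l0 lm mid T(6) by blast
qed

end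

context mctx
begin

lemma initial:
  assumes conn: "connected_lg S0" and v0: "v0 \<in> verts S0" and pi: "pi1_surjective S0 S1 g v0"
    and cl: "card_less (b_edges S1 b) (b_edges S0 b)"
  shows "good"
proof -
  have "\<not> inj_on (snd g) (b_edges S0 b)"
  proof
    assume inj: "inj_on (snd g) (b_edges S0 b)"
    have "snd g ` b_edges S0 b \<subseteq> b_edges S1 b" using g_edge by (auto simp: b_edges_def)
    then show False using cl inj unfolding card_less_def by blast
  qed
  then obtain e e' where ee: "e \<in> b_edges S0 b" "e' \<in> b_edges S0 b" "e \<noteq> e'" "snd g e = snd g e'"
    unfolding inj_on_def by blast
  then have e: "e \<in> edges S0" "lab S0 e = (b, True)" and e': "e' \<in> edges S0" "lab S0 e' = (b, True)"
    by (auto simp: b_edges_def)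
  define uu where "uu = tgt S0 e"
  define uu' where "uu' = tgt S0 e'"
  have uv: "uu \<in> verts S0" "uu' \<in> verts S0" using tgt_in[OF wf0] e e' unfolding uu_def uu'_def by auto
  obtain r where r: "is_path S0 v0 r uu" using conn v0 uv unfolding connected_lg_def by blast
  obtain p where p: "is_path S0 uu p uu'" using conn uv unfolding connected_lg_def by blast
  have re: "set r \<subseteq> edges S0" using is_path_edges[OF r] by simp
  have pe: "set p \<subseteq> edges S0" using is_path_edges[OF p] by simp
  define Q where "Q = GG r @ GG p @ rev_path S1 (GG r)"
  have gu: "fst g uu' = fst g uu"
    using morph_tgt[OF wf0 gm e(1)] morph_tgt[OF wf0 gm e'(1)] ee(4) unfolding uu_def uu'_def by simp
  have Qp: "is_path S1 (fst g v0) Q (fst g v0)"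
  proof -
    have a: "is_path S1 (fst g v0) (GG r) (fst g uu)" using morph_path[OF wf0 gm r] .
    have b: "is_path S1 (fst g uu) (GG p) (fst g uu)" using morph_path[OF wf0 gm p] gu by simp
    have c: "is_path S1 (fst g uu) (rev_path S1 (GG r)) (fst g v0)" using is_path_rev[OF wf1 a] .
    show ?thesis unfolding Q_def using a b c is_path_append[OF wf1] by blast
  qed
  obtain c where c: "is_path S0 v0 c v0" "homotopic S1 (GG c) Q"
    using pi Qp unfolding pi1_surjective_def by blast
  have ce: "set c \<subseteq> edges S0" using is_path_edges[OF c(1)] by simp
  define w where "w = rev_path S0 r @ rev_path S0 c @ r @ p"
  have wp: "is_path S0 uu w uu'"
  proof -
    have "is_path S0 uu (rev_path S0 r) v0" using is_path_rev[OF wf0 r] .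
    moreover have "is_path S0 v0 (rev_path S0 c) v0" using is_path_rev[OF wf0 c(1)] .
    ultimately show ?thesis unfolding w_def using r p is_path_append[OF wf0] by blast
  qed
  have path: "is_path S0 (src S0 e) (e # w @ [einv S0 e']) (src S0 e')"
  proof -
    have "is_path S0 uu' [einv S0 e'] (src S0 e')"
      using wfD[OF wf0 e'(1)] unfolding uu'_def by (simp add: tgt_def)
    then have "is_path S0 uu (w @ [einv S0 e']) (src S0 e')" using wp is_path_append[OF wf0] by blast
    then show ?thesis using e unfolding uu_def by simp
  qed
  have l2: "lab S0 (einv S0 e') = inv_label (b, True)" using wfD(5)[OF wf0 e'(1)] e' by simp
  have ne: "e \<noteq> einv S0 (einv S0 e')" using wfD(3)[OF wf0 e'(1)] ee by simp
  have gy: "snd g (einv S0 e') = einv S1 (snd g e)" using g_edge[OF e'(1)] ee by simp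
  define R where "R = GG r"
  define Cc where "Cc = GG c"
  define Pp where "Pp = GG p"
  have Re: "set R \<subseteq> edges S1" and Ce: "set Cc \<subseteq> edges S1" and Pe: "set Pp \<subseteq> edges S1"
    using re ce pe g_edge unfolding R_def Cc_def Pp_def by auto
  define s1 where "s1 = Rd S1 [] (rev_path S1 R)"
  define s2 where "s2 = Rd S1 s1 (rev_path S1 Cc)"
  have s1r: "reduced S1 s1" unfolding s1_def using Rd_reduced[OF wf1 reduced_Nil rev_path_edges[OF wf1 Re]] .
  have s2r: "reduced S1 s2" unfolding s2_def using Rd_reduced[OF wf1 s1r rev_path_edges[OF wf1 Ce]] .
  have h1: "Rd S1 s2 Cc = s1" unfolding s2_def using Rd_inverse'[OF wf1 s1r Ce] .
  have Qe: "set Q \<subseteq> edges S1" using is_path_edges[OF Qp] by simp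
  have "Rd S1 s2 (Phi S1 Cc) = Rd S1 s2 (Phi S1 Q)" using homotopic_Rd[OF wf1 s2r c(2)[folded Cc_def]] .
  then have h2: "Rd S1 s2 Q = s1" using h1 Phi_edges[OF Ce] Phi_edges[OF Qe] by simp
  define X where "X = Rd S1 (Rd S1 s2 R) Pp"
  have Xr: "reduced S1 X" unfolding X_def using Rd_reduced[OF wf1 Rd_reduced[OF wf1 s2r Re] Pe] .
  have "Rd S1 X (rev_path S1 R) = s1" using h2 unfolding Q_def X_def R_def Pp_def by simp
  then have "X = Rd S1 s1 R" using Rd_inverse'[OF wf1 Xr Re] by simp
  also have "\<dots> = []" unfolding s1_def using Rd_inverse'[OF wf1 reduced_Nil Re] .
  finally have X0: "X = []" .
  have "GG w = rev_path S1 R @ rev_path S1 Cc @ R @ Pp"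
    unfolding w_def R_def Cc_def Pp_def using morph_rev_path[OF gm re] morph_rev_path[OF gm ce] by simp
  then have null: "Rd S1 [] (GG w) = []" using X0 unfolding X_def s2_def s1_def by simp
  show ?thesis using core[OF path e(2) l2 _ ne gy null] by simp
qed

end

theorem lemma9p6:
  fixes S0 :: "('v0, 'e0, 'b::finite) lgraph"
    and S1 :: "('v1, 'e1, 'b) lgraph"
    and g :: "('v0 \<Rightarrow> 'v1) \<times> ('e0 \<Rightarrow> 'e1)"
    and v0 :: 'v0 and b :: 'b
  assumes "wf_lgraph S0" and "wf_lgraph S1"
    and "connected_lg S0" and "connected_lg S1"
    and "strict_morphism S0 S1 g"
    and "v0 \<in> verts S0" and "pi1_surjective S0 S1 g v0"
    and "card_less (b_edges S1 b) (b_edges S0 b)"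
  shows "\<exists>m L \<sigma> (T :: (nat, nat, 'b) lgraph) g' h b'.
           strict_morphism (interval_graph m L) S0 \<sigma> \<and>
           immersed S0 (map (\<lambda>i. snd \<sigma> (i, True)) [0..<Suc m]) \<and>
           is_tree T \<and>
           strict_morphism (interval_graph m L) T g' \<and>
           strict_morphism T S1 h \<and>
           (\<forall>x \<in> verts (interval_graph m L). fst g (fst \<sigma> x) = fst h (fst g' x)) \<and>
           (\<forall>x \<in> edges (interval_graph m L). snd g (snd \<sigma> x) = snd h (snd g' x)) \<and>
           fst b' = b \<and>
           lab S0 (snd \<sigma> (0, True)) = b' \<and>
           lab S0 (einv S0 (snd \<sigma> (m, True))) = b' \<and>
           (\<forall>i. 0 < i \<and> i < m \<longrightarrow> fst (lab S0 (snd \<sigma> (i, True))) \<noteq> b) \<and>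
           snd g' (0, True) = snd g' (m, False)"
proof -
  interpret mctx S0 S1 g b using assms(1,2,5) by unfold_locales
  show ?thesis using good_concl[OF initial[OF assms(3,6,7,8)]] .
qed

end
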